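(* Let $W$ be a finite complex reflection group and $w\in W$. Then $[\mathrm{id},u]_{\ell_R}=[\mathrm{id},u]_{\mathrm{cdf}}$ for every $u<_{\mathrm{cdf}}w$ if and only if $\ell_R(u)=\operatorname{codim}\operatorname{fix}(u)$ for every $u<_{\mathrm{cdf}}w$.
   Context: A finite complex reflection group is a finite subgroup $W\subseteq GL(V)$, $V$ a finite-dimensional complex vector space, generated by its reflections, i.e. elements $g$ whose fixed space $\operatorname{fix}(g)=\ker(g-1)$ has codimension $1$. $R$ is the set of reflections of $W$, $\ell_R(g)$ is the minimal number of reflections with product $g$, and $\operatorname{codim}\operatorname{fix}(g)=\dim V-\dim\operatorname{fix}(g)$. For $f\in\{\ell_R,\operatorname{codim}\operatorname{fix}\}$, $x\le_f y$ iff $f(x)+f(x^{-1}y)=f(y)$, $x<_f y$ means $x\le_f y$ and $x\ne y$, and $[\mathrm{id},w]_f=\{u:u\le_f w\}$; subscript $\mathrm{cdf}$ refers to $f=\operatorname{codim}\operatorname{fix}$. *)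

theory Defs
  imports "HOL-Analysis.Analysis"
begin

text \<open>Linear maps of V = complex^n are represented by n x n complex matrices
  (the dimension n = CARD('n) is a type parameter).\<close>

type_synonym 'n cmat = "complex^'n^'n"

definition fixsp :: "'n::finite cmat \<Rightarrow> (complex^'n) set" where
  "fixsp g = {x. g *v x = x}"

text \<open>codimension of the fixed space, dimension taken over the complex numbers\<close>
definition codimfix :: "'n::finite cmat \<Rightarrow> nat" where
  "codimfix g = CARD('n) - vec.dim (fixsp g)"

definition is_reflection :: "'n::finite cmat \<Rightarrow> bool" where
  "is_reflection g \<longleftrightarrow> codimfix g = 1"

definition reflections :: "'n::finite cmat set \<Rightarrow> 'n cmat set" where
  "reflections W = {g \<in> W. is_reflection g}"

definition prod_mats :: "'n::finite cmat list \<Rightarrow> 'n cmat" where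
  "prod_mats rs = foldr (**) rs (mat 1)"

definition finite_complex_reflection_group :: "'n::finite cmat set \<Rightarrow> bool" where
  "finite_complex_reflection_group W \<longleftrightarrow>
     finite W \<and> mat 1 \<in> W \<and> (\<forall>g\<in>W. invertible g) \<and>
     (\<forall>g\<in>W. \<forall>h\<in>W. g ** h \<in> W) \<and> (\<forall>g\<in>W. matrix_inv g \<in> W) \<and>
     (\<forall>g\<in>W. \<exists>rs. set rs \<subseteq> reflections W \<and> prod_mats rs = g)"

text \<open>reflection length ell_R\<close>
definition reflength :: "'n::finite cmat set \<Rightarrow> 'n cmat \<Rightarrow> nat" where
  "reflength W g = (LEAST k. \<exists>rs. length rs = k \<and> set rs \<subseteq> reflections W \<and> prod_mats rs = g)"

text \<open>x \<le>_f y iff f x + f (x^-1 y) = f y\<close>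
definition le_f :: "('n::finite cmat \<Rightarrow> nat) \<Rightarrow> 'n cmat \<Rightarrow> 'n cmat \<Rightarrow> bool" where
  "le_f f x y \<longleftrightarrow> f x + f (matrix_inv x ** y) = f y"

definition lt_f :: "('n::finite cmat \<Rightarrow> nat) \<Rightarrow> 'n cmat \<Rightarrow> 'n cmat \<Rightarrow> bool" where
  "lt_f f x y \<longleftrightarrow> le_f f x y \<and> x \<noteq> y"

text \<open>[id, w]_f as a subset of W\<close>
definition interval_f :: "'n::finite cmat set \<Rightarrow> ('n cmat \<Rightarrow> nat) \<Rightarrow> 'n cmat \<Rightarrow> 'n cmat set" where
  "interval_f W f w = {u \<in> W. le_f f u w}"

end

theory Submission
  imports Defs
begin



lemma minv:
  fixes A :: "'n::finite cmat"
  assumes "invertible A"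
  shows "A ** matrix_inv A = mat 1" "matrix_inv A ** A = mat 1"
proof -
  have "\<exists>A'. A ** A' = mat 1 \<and> A' ** A = mat 1" using assms unfolding invertible_def by blast
  hence "A ** matrix_inv A = mat 1 \<and> matrix_inv A ** A = mat 1"
    unfolding matrix_inv_def by (rule someI_ex)
  thus "A ** matrix_inv A = mat 1" "matrix_inv A ** A = mat 1" by auto
qed

lemma minv_unique:
  fixes A B :: "'n::finite cmat"
  assumes "B ** A = mat 1"
  shows "matrix_inv A = B"
proof -
  have inv: "invertible A" using assms invertible_left_inverse by blast
  have "B = B ** (A ** matrix_inv A)" using minv[OF inv] by simp
  also have "\<dots> = matrix_inv A" by (simp add: matrix_mul_assoc assms)
  finally show ?thesis by simp
qed

lemma minv_invertible:
  fixes A :: "'n::finite cmat"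
  assumes "invertible A" shows "invertible (matrix_inv A)"
  using minv[OF assms] unfolding invertible_def by blast

lemma minv_mult:
  fixes A B :: "'n::finite cmat"
  assumes "invertible A" "invertible B"
  shows "matrix_inv (A ** B) = matrix_inv B ** matrix_inv A"
proof (rule minv_unique)
  have "matrix_inv B ** matrix_inv A ** (A ** B) = matrix_inv B ** (matrix_inv A ** A) ** B"
    by (simp add: matrix_mul_assoc)
  also have "\<dots> = mat 1" using minv[OF assms(1)] minv[OF assms(2)] by simp
  finally show "matrix_inv B ** matrix_inv A ** (A ** B) = mat 1" .
qed

lemma minv_minv:
  fixes A :: "'n::finite cmat"
  assumes "invertible A" shows "matrix_inv (matrix_inv A) = A"
  by (rule minv_unique) (rule minv(1)[OF assms])

lemma subspace_fixsp: "vec.subspace (fixsp (g::'n::finite cmat))"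
  unfolding vec.subspace_def fixsp_def
  by (auto simp: vec.add vec.scale vec.zero)

lemma dim_fix_le: "vec.dim (fixsp (g::'n::finite cmat)) \<le> CARD('n)"
  by (rule dim_subset_UNIV_cart_gen)

lemma codimfix_id: "codimfix (mat 1 :: 'n::finite cmat) = 0"
proof -
  have "fixsp (mat 1 :: 'n cmat) = UNIV" unfolding fixsp_def by simp
  moreover have "vec.dim (UNIV :: (complex^'n) set) = CARD('n)" by (rule vec_dim_card)
  ultimately show ?thesis unfolding codimfix_def by simp
qed

lemma codimfix_0:
  fixes g :: "'n::finite cmat"
  assumes "codimfix g = 0" shows "g = mat 1"
proof -
  have "vec.dim (fixsp g) = CARD('n)" using assms dim_fix_le[of g] unfolding codimfix_def by simp
  moreover have "vec.dim (UNIV :: (complex^'n) set) = CARD('n)" by (rule vec_dim_card)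
  ultimately have "vec.span (fixsp g) = vec.span UNIV" by (intro vec.dim_eq_span) auto
  hence "vec.span (fixsp g) = UNIV" by simp
  hence "fixsp g = UNIV" using vec.span_eq_iff subspace_fixsp by metis
  hence "\<forall>x. g *v x = mat 1 *v x" unfolding fixsp_def by auto
  thus ?thesis using matrix_eq by blast
qed

lemma codimfix_mult:
  fixes g h :: "'n::finite cmat"
  shows "codimfix (g ** h) \<le> codimfix g + codimfix h"
proof -
  let ?F = "fixsp g" and ?G = "fixsp h"
  have sub: "?F \<inter> ?G \<subseteq> fixsp (g ** h)"
    unfolding fixsp_def by (auto simp: matrix_vector_mul_assoc[symmetric])
  have "vec.dim (?F \<inter> ?G) \<le> vec.dim (fixsp (g ** h))" using vec.dim_subset[OF sub] .
  moreover have "vec.dim {x + y |x y. x \<in> ?F \<and> y \<in> ?G} + vec.dim (?F \<inter> ?G) = vec.dim ?F + vec.dim ?G"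
    using vec.dim_sums_Int[OF subspace_fixsp subspace_fixsp] .
  moreover have "vec.dim {x + y |x y. x \<in> ?F \<and> y \<in> ?G} \<le> CARD('n)" by (rule dim_subset_UNIV_cart_gen)
  ultimately show ?thesis unfolding codimfix_def using dim_fix_le[of g] dim_fix_le[of h] by linarith
qed

lemma codimfix_conj:
  fixes u v :: "'n::finite cmat"
  assumes "invertible u"
  shows "codimfix (matrix_inv u ** v ** u) = codimfix v"
proof -
  have "fixsp (matrix_inv u ** v ** u) = (\<lambda>x. matrix_inv u *v x) ` fixsp v"
  proof
    show "fixsp (matrix_inv u ** v ** u) \<subseteq> (\<lambda>x. matrix_inv u *v x) ` fixsp v"
    proof
      fix x assume "x \<in> fixsp (matrix_inv u ** v ** u)"
      hence x: "(matrix_inv u ** v ** u) *v x = x" unfolding fixsp_def by simp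
      have "v *v (u *v x) = u *v x"
      proof -
        have "v *v (u *v x) = (u ** (matrix_inv u ** v ** u)) *v x"
        proof -
          have "u ** (matrix_inv u ** v ** u) = (u ** matrix_inv u) ** v ** u"
            by (simp add: matrix_mul_assoc)
          thus ?thesis using minv(1)[OF assms] by (simp add: matrix_vector_mul_assoc)
        qed
        also have "\<dots> = u *v x" using x by (simp add: matrix_vector_mul_assoc[symmetric])
        finally show ?thesis .
      qed
      moreover have "x = matrix_inv u *v (u *v x)"
        using minv(2)[OF assms] by (simp add: matrix_vector_mul_assoc)
      ultimately show "x \<in> (\<lambda>x. matrix_inv u *v x) ` fixsp v" unfolding fixsp_def by blast
    qed
    show "(\<lambda>x. matrix_inv u *v x) ` fixsp v \<subseteq> fixsp (matrix_inv u ** v ** u)"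
    proof
      fix y assume "y \<in> (\<lambda>x. matrix_inv u *v x) ` fixsp v"
      then obtain x where y: "y = matrix_inv u *v x" and x: "v *v x = x" unfolding fixsp_def by auto
      have "(matrix_inv u ** v ** u) *v y = matrix_inv u *v (v *v ((u ** matrix_inv u) *v x))"
        unfolding y by (simp add: matrix_vector_mul_assoc matrix_mul_assoc)
      also have "\<dots> = y" using minv(1)[OF assms] x y by simp
      finally show "y \<in> fixsp (matrix_inv u ** v ** u)" unfolding fixsp_def by simp
    qed
  qed
  moreover have "vec.dim ((\<lambda>x. matrix_inv u *v x) ` fixsp v) = vec.dim (fixsp v)"
    apply (rule vec.dim_image_eq)
     apply (rule matrix_vector_mul_linear_gen)
    using inj_matrix_vector_mult[OF minv_invertible[OF assms]] by (simp add: inj_on_def inj_def)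
  ultimately show ?thesis unfolding codimfix_def by simp
qed

lemma prod_cons: "prod_mats (r # rs) = r ** prod_mats rs" by (simp add: prod_mats_def)
lemma prod_nil: "prod_mats [] = mat 1" by (simp add: prod_mats_def)

lemma W_inv: "finite_complex_reflection_group W \<Longrightarrow> g \<in> W \<Longrightarrow> invertible g"
  unfolding finite_complex_reflection_group_def by blast
lemma W_mult: "finite_complex_reflection_group W \<Longrightarrow> g \<in> W \<Longrightarrow> h \<in> W \<Longrightarrow> g ** h \<in> W"
  unfolding finite_complex_reflection_group_def by blast
lemma W_minv: "finite_complex_reflection_group W \<Longrightarrow> g \<in> W \<Longrightarrow> matrix_inv g \<in> W"
  unfolding finite_complex_reflection_group_def by blast

lemma prod_in_W:
  assumes "finite_complex_reflection_group W" "set rs \<subseteq> reflections W"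
  shows "prod_mats rs \<in> W"
  using assms(2)
proof (induction rs)
  case Nil thus ?case using assms(1) by (simp add: prod_nil finite_complex_reflection_group_def)
next
  case (Cons r rs) thus ?case using assms(1) W_mult by (auto simp: prod_cons reflections_def)
qed

lemma cdf_le_len:
  assumes "set rs \<subseteq> reflections W"
  shows "codimfix (prod_mats rs) \<le> length rs"
  using assms
proof (induction rs)
  case Nil thus ?case by (simp add: prod_nil codimfix_id)
next
  case (Cons r rs)
  have "codimfix r = 1" using Cons.prems by (auto simp: reflections_def is_reflection_def)
  thus ?case using Cons codimfix_mult[of r "prod_mats rs"] by (auto simp: prod_cons)
qed

lemma refl_ex:
  assumes "finite_complex_reflection_group W" "g \<in> W"
  shows "\<exists>rs. length rs = reflength W g \<and> set rs \<subseteq> reflections W \<and> prod_mats rs = g"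
proof -
  obtain rs where "set rs \<subseteq> reflections W \<and> prod_mats rs = g"
    using assms unfolding finite_complex_reflection_group_def by blast
  hence "\<exists>k rs. length rs = k \<and> set rs \<subseteq> reflections W \<and> prod_mats rs = g" by blast
  thus ?thesis unfolding reflength_def by (rule LeastI_ex)
qed

lemma refl_le:
  assumes "set rs \<subseteq> reflections W"
  shows "reflength W (prod_mats rs) \<le> length rs"
  unfolding reflength_def by (rule Least_le) (use assms in blast)

lemma cdf_le_refl:
  assumes "finite_complex_reflection_group W" "g \<in> W"
  shows "codimfix g \<le> reflength W g"
  using refl_ex[OF assms] cdf_le_len by metis

lemma le_trans_lt:
  fixes x y w :: "'n::finite cmat"
  assumes ix: "invertible x" and iy: "invertible y"
    and xy: "le_f codimfix x y" and yw: "lt_f codimfix y w"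
  shows "lt_f codimfix x w"
proof -
  have yw': "codimfix y + codimfix (matrix_inv y ** w) = codimfix w" and ne: "y \<noteq> w"
    using yw unfolding lt_f_def le_f_def by auto
  have xy': "codimfix x + codimfix (matrix_inv x ** y) = codimfix y" using xy unfolding le_f_def .
  have e1: "x ** (matrix_inv x ** w) = w"
    by (simp add: matrix_mul_assoc minv(1)[OF ix])
  have e2: "(matrix_inv x ** y) ** (matrix_inv y ** w) = matrix_inv x ** w"
  proof -
    have "(matrix_inv x ** y) ** (matrix_inv y ** w) = matrix_inv x ** (y ** matrix_inv y) ** w"
      by (simp add: matrix_mul_assoc)
    thus ?thesis by (simp add: minv(1)[OF iy])
  qed
  have "codimfix w \<le> codimfix x + codimfix (matrix_inv x ** w)"
    using codimfix_mult[of x "matrix_inv x ** w"] e1 by simp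
  moreover have "codimfix (matrix_inv x ** w) \<le> codimfix (matrix_inv x ** y) + codimfix (matrix_inv y ** w)"
    using codimfix_mult[of "matrix_inv x ** y" "matrix_inv y ** w"] e2 by simp
  ultimately have le: "le_f codimfix x w" unfolding le_f_def using xy' yw' by linarith
  have "x \<noteq> w"
  proof
    assume "x = w"
    hence "codimfix w + codimfix (matrix_inv w ** y) = codimfix y" using xy' by simp
    hence "codimfix (matrix_inv y ** w) = 0" using yw' by linarith
    hence "matrix_inv y ** w = mat 1" by (rule codimfix_0)
    hence "y ** (matrix_inv y ** w) = y" by simp
    hence "w = y" by (simp add: matrix_mul_assoc minv(1)[OF iy])
    thus False using ne by simp
  qed
  thus ?thesis using le unfolding lt_f_def by simp
qed

lemma le_compl:
  fixes u v :: "'n::finite cmat"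
  assumes iu: "invertible u" and iv: "invertible v" and vu: "le_f codimfix v u"
  shows "le_f codimfix (matrix_inv v ** u) u"
proof -
  have "matrix_inv (matrix_inv v ** u) = matrix_inv u ** v"
    using minv_mult[OF minv_invertible[OF iv] iu] minv_minv[OF iv] by simp
  hence "codimfix (matrix_inv (matrix_inv v ** u) ** u) = codimfix v"
    using codimfix_conj[OF iu, of v] by simp
  thus ?thesis using vu unfolding le_f_def by simp
qed

theorem mainTheorem13:
  fixes W :: "'n::finite cmat set" and w :: "'n cmat"
  assumes "finite_complex_reflection_group W" and "w \<in> W"
  shows "(\<forall>u\<in>W. lt_f codimfix u w \<longrightarrow>
            interval_f W (reflength W) u = interval_f W codimfix u)
     \<longleftrightarrow> (\<forall>u\<in>W. lt_f codimfix u w \<longrightarrow> reflength W u = codimfix u)"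
proof
  assume H: "\<forall>u\<in>W. lt_f codimfix u w \<longrightarrow> interval_f W (reflength W) u = interval_f W codimfix u"
  have "\<forall>u\<in>W. reflength W u = n \<longrightarrow> lt_f codimfix u w \<longrightarrow> reflength W u = codimfix u" for n
  proof (induction n)
    case 0
    show ?case
    proof (intro ballI impI)
      fix u assume u: "u \<in> W" "reflength W u = 0"
      then obtain rs where "length rs = 0" "prod_mats rs = u" using refl_ex[OF assms(1) u(1)] by auto
      hence "u = mat 1" by (simp add: prod_nil)
      thus "reflength W u = codimfix u" using u by (simp add: codimfix_id)
    qed
  next
    case (Suc n)
    show ?case
    proof (intro ballI impI)
      fix u assume u: "u \<in> W" "reflength W u = Suc n" and uw: "lt_f codimfix u w"
      obtain rs where rs: "length rs = Suc n" "set rs \<subseteq> reflections W" "prod_mats rs = u"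
        using refl_ex[OF assms(1) u(1)] u(2) by auto
      then obtain r rs' where rr: "rs = r # rs'" by (cases rs) auto
      define u' where "u' = prod_mats rs'"
      have rR: "r \<in> reflections W" and rs'R: "set rs' \<subseteq> reflections W" using rs(2) rr by auto
      have rW: "r \<in> W" and cr: "codimfix r = 1" using rR by (auto simp: reflections_def is_reflection_def)
      have u'W: "u' \<in> W" unfolding u'_def by (rule prod_in_W[OF assms(1) rs'R])
      have uu: "u = r ** u'" using rs(3) rr by (simp add: prod_cons u'_def)
      have l1: "reflength W u' \<le> n" using refl_le[OF rs'R] rs(1) rr by (simp add: u'_def)
      obtain rs'' where rs'': "length rs'' = reflength W u'" "set rs'' \<subseteq> reflections W" "prod_mats rs'' = u'"
        using refl_ex[OF assms(1) u'W] by auto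
      have "reflength W (prod_mats (r # rs'')) \<le> length (r # rs'')"
        by (rule refl_le) (use rs'' rR in auto)
      hence "Suc n \<le> Suc (reflength W u')" using rs'' uu u(2) by (simp add: prod_cons)
      hence lu': "reflength W u' = n" using l1 by simp
      have lr: "reflength W r = 1"
      proof -
        have "reflength W (prod_mats [r]) \<le> 1" using refl_le[of "[r]" W] rR by simp
        moreover have "codimfix r \<le> reflength W r" by (rule cdf_le_refl[OF assms(1) rW])
        ultimately show ?thesis using cr by (simp add: prod_cons prod_nil)
      qed
      have ir: "invertible r" by (rule W_inv[OF assms(1) rW])
      have iu: "invertible u" by (rule W_inv[OF assms(1) u(1)])
      have iu': "invertible u'" by (rule W_inv[OF assms(1) u'W])
      have mu: "matrix_inv r ** u = u'" unfolding uu
        by (simp add: matrix_mul_assoc minv(2)[OF ir])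
      have "r \<in> interval_f W (reflength W) u"
        unfolding interval_f_def le_f_def using rW mu lr lu' u(2) by simp
      hence "r \<in> interval_f W codimfix u" using H u(1) uw by simp
      hence rle: "le_f codimfix r u" unfolding interval_f_def by simp
      have "le_f codimfix u' u" using le_compl[OF iu ir rle] mu by simp
      hence "lt_f codimfix u' w" using le_trans_lt[OF iu' iu _ uw] by simp
      hence "reflength W u' = codimfix u'" using Suc.IH u'W lu' by simp
      thus "reflength W u = codimfix u" using rle mu cr lu' u(2) unfolding le_f_def by simp
    qed
  qed
  thus "\<forall>u\<in>W. lt_f codimfix u w \<longrightarrow> reflength W u = codimfix u" by blast
next
  assume H: "\<forall>u\<in>W. lt_f codimfix u w \<longrightarrow> reflength W u = codimfix u"
  show "\<forall>u\<in>W. lt_f codimfix u w \<longrightarrow> interval_f W (reflength W) u = interval_f W codimfix u"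
  proof (intro ballI impI)
    fix u assume uW: "u \<in> W" and uw: "lt_f codimfix u w"
    have lu: "reflength W u = codimfix u" using H uW uw by simp
    have iu: "invertible u" by (rule W_inv[OF assms(1) uW])
    have "le_f (reflength W) v u \<longleftrightarrow> le_f codimfix v u" if vW: "v \<in> W" for v
    proof -
      define v' where "v' = matrix_inv v ** u"
      have iv: "invertible v" by (rule W_inv[OF assms(1) vW])
      have v'W: "v' \<in> W" unfolding v'_def by (rule W_mult[OF assms(1) W_minv[OF assms(1) vW] uW])
      have iv': "invertible v'" by (rule W_inv[OF assms(1) v'W])
      have vv: "v ** v' = u" unfolding v'_def by (simp add: matrix_mul_assoc minv(1)[OF iv])
      have c1: "codimfix u \<le> codimfix v + codimfix v'" using codimfix_mult[of v v'] vv by simp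
      have c2: "codimfix v \<le> reflength W v" by (rule cdf_le_refl[OF assms(1) vW])
      have c3: "codimfix v' \<le> reflength W v'" by (rule cdf_le_refl[OF assms(1) v'W])
      show ?thesis
      proof
        assume "le_f (reflength W) v u"
        hence "reflength W v + reflength W v' = reflength W u" unfolding le_f_def v'_def .
        thus "le_f codimfix v u" unfolding le_f_def v'_def[symmetric] using lu c1 c2 c3 by linarith
      next
        assume vu: "le_f codimfix v u"
        have "lt_f codimfix v w" by (rule le_trans_lt[OF iv iu vu uw])
        hence h1: "reflength W v = codimfix v" using H vW by simp
        have "le_f codimfix v' u" unfolding v'_def by (rule le_compl[OF iu iv vu])
        hence "lt_f codimfix v' w" by (rule le_trans_lt[OF iv' iu _ uw])
        hence h2: "reflength W v' = codimfix v'" using H v'W by simp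
        show "le_f (reflength W) v u" using vu h1 h2 lu unfolding le_f_def v'_def[symmetric] by simp
      qed
    qed
    thus "interval_f W (reflength W) u = interval_f W codimfix u"
      unfolding interval_f_def by blast
  qed
qed

end
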